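(* Let $k,r\in\mathbb N$ with $r\ge2$, let $s_1,\dots,s_r\in\mathbb N$ with $s_i\le k$, let $H_1,\dots,H_r$ be graphs with $1\le v(H_i)\le s_i$, and let $N\in\mathbb N$ with $N\ge r^{C(k+t)}$, where $t=\sum_i s_i$. Let $\mathbf H=(H_i)$, $\mathbf s=(s_i)$. Then for every graph $G$ on $N$ vertices with $G\in\mathcal B'(\mathbf H)\cap\mathcal E(\mathbf s)$ and every $(S,c)\in\mathbf S(G)$, the hypergraph $\mathfrak I_{H_i^-,G_i,G}[W]$ is $(p,p|W|)$-Janson for every $i\in[r]$ and every $W\subset S$ with $|W|\ge\delta N/(8r)$.
   Context: Constants: $C=300$, $\delta=r^{-50}$, $p=\frac1{2^{25}k^2r^4}$. $H_i^-$ is the graph obtained from $H_i$ by deleting a vertex. Hypergraphs are identified with their edge sets; $\mathcal G[W]=\{E\in\mathcal G:E\subset W\}$. For $\nu:\mathcal G\to\mathbb R_{\ge0}$: $e(\nu)=\sum_E\nu(E)$, $d_\nu(L)=\sum_{E\in\mathcal G,L\subset E}\nu(E)$, $\Lambda_p(\nu)=\sum_{L\subset V(\mathcal G),|L|\ge2}d_\nu(L)^2p^{-|L|}$; for $R>0$, $\mathcal G$ is $(p,R)$-Janson if some $\nu$ has $\Lambda_p(\nu)<e(\nu)^2/R$. For graphs $F,G$ and $G'\subset G$, $\mathfrak I_{F,G',G}$ is the hypergraph on $V(G)$ with edges the sets $L$ with $G'[L]=G[L]\cong F$. For a colouring $c$ with colours in $[r]$, $G_i$ is the subgraph of edges of colour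 $i$. $\mathcal E(\mathbf s)$: graphs $G$ such that for all $t'<t$, all graphs $F_1,\dots,F_r$ with $v(F_i)\le s_i$ and $\sum v(F_i)=t'$, every $W\subset V(G)$ with $|W|\ge(\delta/(8r))^{t-t'}v(G)$ and every $c:E(G[W])\to[r]$, some $\mathfrak I_{F_i,G_i,G}[W]$ is $(p,p|W|)$-Janson. $\mathcal B'(\mathbf H)$: graphs $G$ for which there are $S\subset V(G)$ with $|S|\ge\delta^{2/3}v(G)$ and $c:E(G[S])\to[r]$ with $\mathfrak I_{H_i,G_i,G}[S]$ not $(p,2^{-9}r^{-1}\delta p\,v(G))$-Janson for all $i$. $\mathbf S(G)$: the set of pairs $(S,c)$ with $S\subset V(G)$, $|S|\ge\delta^{2/3}N$, $c:E(G[S])\to[r]$, such that $\mathfrak I_{H_i,G_i,G}[S]$ is not $(p,2^{-9}r^{-1}\delta pN)$-Janson for every $i\in[r]$. *)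

theory Defs
  imports Complex_Main
begin

type_synonym 'a graph = "'a set \<times> 'a set set"

definition verts :: "'a graph \<Rightarrow> 'a set" where "verts G = fst G"
definition edges :: "'a graph \<Rightarrow> 'a set set" where "edges G = snd G"

definition wf_graph :: "'a graph \<Rightarrow> bool" where
  "wf_graph G \<longleftrightarrow> finite (verts G) \<and> (\<forall>e\<in>edges G. e \<subseteq> verts G \<and> card e = 2)"

definition induced :: "'a graph \<Rightarrow> 'a set \<Rightarrow> 'a graph" where
  "induced G L = (L, {e \<in> edges G. e \<subseteq> L})"

definition delete_vertex :: "'a graph \<Rightarrow> 'a \<Rightarrow> 'a graph" where
  "delete_vertex G x = induced G (verts G - {x})"

definition graph_iso :: "'a graph \<Rightarrow> 'b graph \<Rightarrow> bool" where
  "graph_iso F G \<longleftrightarrow> (\<exists>f. bij_betw f (verts F) (verts G) \<and>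
     (\<forall>u\<in>verts F. \<forall>v\<in>verts F. {u, v} \<in> edges F \<longleftrightarrow> {f u, f v} \<in> edges G))"

definition colour_graph :: "'a graph \<Rightarrow> 'a set \<Rightarrow> ('a set \<Rightarrow> nat) \<Rightarrow> nat \<Rightarrow> 'a graph" where
  "colour_graph G S c i = (verts G, {e \<in> edges (induced G S). c e = i})"

definition is_colouring :: "nat \<Rightarrow> 'a graph \<Rightarrow> 'a set \<Rightarrow> ('a set \<Rightarrow> nat) \<Rightarrow> bool" where
  "is_colouring r G S c \<longleftrightarrow> (\<forall>e\<in>edges (induced G S). c e \<in> {1..r})"

definition hrestrict :: "'a set set \<Rightarrow> 'a set \<Rightarrow> 'a set set" where
  "hrestrict \<G> W = {E \<in> \<G>. E \<subseteq> W}"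

definition e_nu :: "'a set set \<Rightarrow> ('a set \<Rightarrow> real) \<Rightarrow> real" where
  "e_nu \<G> \<nu> = (\<Sum>E\<in>\<G>. \<nu> E)"

definition d_nu :: "'a set set \<Rightarrow> ('a set \<Rightarrow> real) \<Rightarrow> 'a set \<Rightarrow> real" where
  "d_nu \<G> \<nu> L = (\<Sum>E\<in>{E \<in> \<G>. L \<subseteq> E}. \<nu> E)"

(* V is the vertex set of the hypergraph *)
definition Lambda_p :: "real \<Rightarrow> 'a set \<Rightarrow> 'a set set \<Rightarrow> ('a set \<Rightarrow> real) \<Rightarrow> real" where
  "Lambda_p p V \<G> \<nu> = (\<Sum>L\<in>{L. L \<subseteq> V \<and> card L \<ge> 2}. (d_nu \<G> \<nu> L)^2 * p powi (- int (card L)))"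

definition janson :: "real \<Rightarrow> real \<Rightarrow> 'a set \<Rightarrow> 'a set set \<Rightarrow> bool" where
  "janson p R V \<G> \<longleftrightarrow> (\<exists>\<nu>. (\<forall>E\<in>\<G>. \<nu> E \<ge> 0) \<and> Lambda_p p V \<G> \<nu> < (e_nu \<G> \<nu>)^2 / R)"

definition copies :: "'b graph \<Rightarrow> 'a graph \<Rightarrow> 'a graph \<Rightarrow> 'a set set" where
  "copies F G' G = {L. L \<subseteq> verts G \<and> induced G' L = induced G L \<and> graph_iso F (induced G L)}"

definition C_const :: nat where "C_const = 300"
definition delta :: "nat \<Rightarrow> real" where "delta r = 1 / (real r) ^ 50"
definition p_const :: "nat \<Rightarrow> nat \<Rightarrow> real" where
  "p_const k r = 1 / (2 ^ 25 * (real k)^2 * (real r)^4)"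

definition class_E :: "nat \<Rightarrow> nat \<Rightarrow> (nat \<Rightarrow> nat) \<Rightarrow> 'a graph \<Rightarrow> bool" where
  "class_E k r s G \<longleftrightarrow>
    (let t = (\<Sum>i\<in>{1..r}. s i) in
     \<forall>t' < t. \<forall>F :: nat \<Rightarrow> nat graph.
       (\<forall>i\<in>{1..r}. wf_graph (F i) \<and> card (verts (F i)) \<le> s i) \<and>
       (\<Sum>i\<in>{1..r}. card (verts (F i))) = t' \<longrightarrow>
       (\<forall>W c. W \<subseteq> verts G \<and>
              real (card W) \<ge> (delta r / (8 * real r)) ^ (t - t') * real (card (verts G)) \<and>
              is_colouring r G W c \<longrightarrow>
          (\<exists>i\<in>{1..r}. janson (p_const k r) (p_const k r * real (card W)) W
              (hrestrict (copies (F i) (colour_graph G W c i) G) W))))"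

definition good_pair :: "nat \<Rightarrow> nat \<Rightarrow> (nat \<Rightarrow> nat graph) \<Rightarrow> 'a graph \<Rightarrow> 'a set \<Rightarrow> ('a set \<Rightarrow> nat) \<Rightarrow> bool" where
  "good_pair k r H G S c \<longleftrightarrow>
     S \<subseteq> verts G \<and> real (card S) \<ge> delta r powr (2/3) * real (card (verts G)) \<and>
     is_colouring r G S c \<and>
     (\<forall>i\<in>{1..r}. \<not> janson (p_const k r)
         (2 powi (-9) / real r * delta r * p_const k r * real (card (verts G))) S
         (hrestrict (copies (H i) (colour_graph G S c i) G) S))"

definition class_B' :: "nat \<Rightarrow> nat \<Rightarrow> (nat \<Rightarrow> nat graph) \<Rightarrow> 'a graph \<Rightarrow> bool" where
  "class_B' k r H G \<longleftrightarrow> (\<exists>S c. good_pair k r H G S c)"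

end

theory Submission
  imports Defs
begin

lemma hrestrict_colour_eq:
  assumes "W \<subseteq> S"
  shows "hrestrict (copies F (colour_graph G W c j) G) W = hrestrict (copies F (colour_graph G S c j) G) W"
proof -
  have "induced (colour_graph G W c j) L = induced (colour_graph G S c j) L" if "L \<subseteq> W" for L
    using that assms unfolding induced_def colour_graph_def edges_def by auto
  then show ?thesis unfolding hrestrict_def copies_def by auto
qed

lemma d_nu_ext:
  assumes "finite S" "W \<subseteq> S"
  shows "d_nu (hrestrict \<G> S) (\<lambda>E. if E \<subseteq> W then \<nu> E else 0) L = d_nu (hrestrict \<G> W) \<nu> L"
proof -
  have fin: "finite {E \<in> hrestrict \<G> S. L \<subseteq> E}"
    by (rule finite_subset[of _ "Pow S"]) (use assms in \<open>auto simp: hrestrict_def\<close>)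
  have "(\<Sum>E\<in>{E \<in> hrestrict \<G> S. L \<subseteq> E}. (if E \<subseteq> W then \<nu> E else 0))
      = (\<Sum>E\<in>{E \<in> hrestrict \<G> W. L \<subseteq> E}. (if E \<subseteq> W then \<nu> E else 0))"
    by (rule sum.mono_neutral_right[OF fin]) (use assms in \<open>auto simp: hrestrict_def\<close>)
  also have "\<dots> = (\<Sum>E\<in>{E \<in> hrestrict \<G> W. L \<subseteq> E}. \<nu> E)"
    by (rule sum.cong) (auto simp: hrestrict_def)
  finally show ?thesis unfolding d_nu_def .
qed

lemma janson_ext:
  assumes "finite S" "W \<subseteq> S" "janson p R W (hrestrict \<G> W)" "0 < R'" "R' \<le> R"
  shows "janson p R' S (hrestrict \<G> S)"
proof -
  obtain \<nu> where nn: "\<forall>E\<in>hrestrict \<G> W. \<nu> E \<ge> 0"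
    and lt: "Lambda_p p W (hrestrict \<G> W) \<nu> < (e_nu (hrestrict \<G> W) \<nu>)^2 / R"
    using assms(3) unfolding janson_def by blast
  define \<nu>' where "\<nu>' = (\<lambda>E. if E \<subseteq> W then \<nu> E else 0)"
  have nn': "\<forall>E\<in>hrestrict \<G> S. \<nu>' E \<ge> 0"
    using nn by (auto simp: \<nu>'_def hrestrict_def)
  have fin: "finite (hrestrict \<G> S)"
    by (rule finite_subset[of _ "Pow S"]) (use assms in \<open>auto simp: hrestrict_def\<close>)
  have e: "e_nu (hrestrict \<G> S) \<nu>' = e_nu (hrestrict \<G> W) \<nu>"
  proof -
    have "(\<Sum>E\<in>hrestrict \<G> S. \<nu>' E) = (\<Sum>E\<in>hrestrict \<G> W. \<nu>' E)"
      by (rule sum.mono_neutral_right[OF fin]) (use assms in \<open>auto simp: hrestrict_def \<nu>'_def\<close>)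
    also have "\<dots> = (\<Sum>E\<in>hrestrict \<G> W. \<nu> E)"
      by (rule sum.cong) (auto simp: hrestrict_def \<nu>'_def)
    finally show ?thesis unfolding e_nu_def .
  qed
  have d: "\<And>L. d_nu (hrestrict \<G> S) \<nu>' L = d_nu (hrestrict \<G> W) \<nu> L"
    unfolding \<nu>'_def by (rule d_nu_ext[OF assms(1,2)])
  have d0: "d_nu (hrestrict \<G> W) \<nu> L = 0" if "\<not> L \<subseteq> W" for L
  proof -
    have "{E \<in> hrestrict \<G> W. L \<subseteq> E} = {}" using that by (auto simp: hrestrict_def)
    then show ?thesis unfolding d_nu_def by (metis sum.empty)
  qed
  have finL: "finite {L. L \<subseteq> S \<and> card L \<ge> 2}"
    by (rule finite_subset[of _ "Pow S"]) (use assms in auto)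
  have la: "Lambda_p p S (hrestrict \<G> S) \<nu>' = Lambda_p p W (hrestrict \<G> W) \<nu>"
    unfolding Lambda_p_def d
    by (rule sum.mono_neutral_right[OF finL]) (use assms d0 in auto)
  have "(e_nu (hrestrict \<G> W) \<nu>)^2 / R \<le> (e_nu (hrestrict \<G> W) \<nu>)^2 / R'"
    using assms(4,5) by (intro divide_left_mono) auto
  then have "Lambda_p p S (hrestrict \<G> S) \<nu>' < (e_nu (hrestrict \<G> S) \<nu>')^2 / R'"
    using lt la e by simp
  then show ?thesis unfolding janson_def using nn' by blast
qed

theorem lemma6p5:
  fixes k r N :: nat and s :: "nat \<Rightarrow> nat" and H :: "nat \<Rightarrow> nat graph"
    and G :: "'a graph" and S :: "'a set" and c :: "'a set \<Rightarrow> nat"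
  assumes "r \<ge> 2"
    and "\<forall>i\<in>{1..r}. s i \<le> k"
    and "\<forall>i\<in>{1..r}. wf_graph (H i) \<and> 1 \<le> card (verts (H i)) \<and> card (verts (H i)) \<le> s i"
    and "N \<ge> r ^ (C_const * (k + (\<Sum>i\<in>{1..r}. s i)))"
    and "wf_graph G" and "card (verts G) = N"
    and "class_B' k r H G" and "class_E k r s G"
    and "good_pair k r H G S c"
  shows "\<forall>i\<in>{1..r}. \<forall>x\<in>verts (H i). \<forall>W. W \<subseteq> S \<and> real (card W) \<ge> delta r * real N / (8 * real r) \<longrightarrow>
           janson (p_const k r) (p_const k r * real (card W)) W
             (hrestrict (copies (delete_vertex (H i) x) (colour_graph G S c i) G) W)"
proof (intro ballI allI impI)
  fix i x W
  assume i: "i \<in> {1..r}" and x: "x \<in> verts (H i)" and W: "W \<subseteq> S \<and> real (card W) \<ge> delta r * real N / (8 * real r)"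
  define p where "p = p_const k r"
  define t where "t = (\<Sum>i\<in>{1..r}. s i)"
  define F where "F = (\<lambda>j. if j = i then delete_vertex (H i) x else H j)"
  define t' where "t' = (\<Sum>j\<in>{1..r}. card (verts (F j)))"
  have Hi: "wf_graph (H i)" "1 \<le> card (verts (H i))" "card (verts (H i)) \<le> s i" using assms(3) i by auto
  have k1: "k \<ge> 1" using Hi assms(2) i by fastforce
  have r0: "real r > 0" using assms(1) by simp
  have p0: "p > 0" unfolding p_def p_const_def using k1 r0 by simp
  have d0: "delta r > 0" unfolding delta_def using r0 by simp
  have d1: "delta r \<le> 1" unfolding delta_def using assms(1) by simp
  have N0: "N \<ge> 1" using assms(4) assms(1)
    by (metis le_trans one_le_numeral one_le_power order.trans)
  have finG: "finite (verts G)" using assms(5) unfolding wf_graph_def by simp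
  have gp: "S \<subseteq> verts G" "is_colouring r G S c"
    "\<forall>j\<in>{1..r}. \<not> janson p (2 powi (-9) / real r * delta r * p * real N) S
         (hrestrict (copies (H j) (colour_graph G S c j) G) S)"
    using assms(9,6) unfolding good_pair_def p_def by auto
  have finS: "finite S" using finG gp(1) finite_subset by blast
  have Fi: "card (verts (F i)) = card (verts (H i)) - 1"
    using x Hi(1) unfolding F_def delete_vertex_def induced_def verts_def wf_graph_def by simp
  have Fwf: "\<forall>j\<in>{1..r}. wf_graph (F j) \<and> card (verts (F j)) \<le> s j"
  proof
    fix j assume j: "j \<in> {1..r}"
    show "wf_graph (F j) \<and> card (verts (F j)) \<le> s j"
    proof (cases "j = i")
      case True
      have "wf_graph (F j)" using Hi(1) True
        unfolding F_def delete_vertex_def induced_def verts_def edges_def wf_graph_def by auto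
      then show ?thesis using Fi Hi True by simp
    next
      case False then show ?thesis using assms(3) j unfolding F_def by auto
    qed
  qed
  have sumH: "t' + 1 = (\<Sum>j\<in>{1..r}. card (verts (H j)))"
  proof -
    have "(\<Sum>j\<in>{1..r}. card (verts (H j))) = card (verts (H i)) + (\<Sum>j\<in>{1..r}-{i}. card (verts (H j)))"
      using i by (simp add: sum.remove)
    moreover have "t' = card (verts (F i)) + (\<Sum>j\<in>{1..r}-{i}. card (verts (F j)))"
      unfolding t'_def using i by (simp add: sum.remove)
    moreover have "(\<Sum>j\<in>{1..r}-{i}. card (verts (F j))) = (\<Sum>j\<in>{1..r}-{i}. card (verts (H j)))"
      by (rule sum.cong) (auto simp: F_def)
    ultimately show ?thesis using Fi Hi(2) by simp
  qed
  have "(\<Sum>j\<in>{1..r}. card (verts (H j))) \<le> t" unfolding t_def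
    by (rule sum_mono) (use assms(3) in auto)
  then have tt: "t' < t" using sumH by simp
  have Wsub: "W \<subseteq> verts G" using W gp(1) by auto
  have q0: "0 < delta r / (8 * real r)" "delta r / (8 * real r) \<le> 1" using d0 d1 r0 by auto
  have "(delta r / (8 * real r)) ^ (t - t') \<le> (delta r / (8 * real r)) ^ 1"
    by (rule power_decreasing) (use tt q0 in auto)
  then have "(delta r / (8 * real r)) ^ (t - t') * real (card (verts G)) \<le> delta r / (8 * real r) * real N"
  proof -
    have "(delta r / (8 * real r)) ^ (t - t') * real N \<le> delta r / (8 * real r) * real N"
      using \<open>(delta r / (8 * real r)) ^ (t - t') \<le> (delta r / (8 * real r)) ^ 1\<close>
      by (intro mult_right_mono) auto
    then show ?thesis using assms(6) by simp
  qed
  also have "\<dots> \<le> real (card W)" using W by simp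
  finally have Wbig: "real (card W) \<ge> (delta r / (8 * real r)) ^ (t - t') * real (card (verts G))" .
  have Wcol: "is_colouring r G W c"
    using gp(2) W unfolding is_colouring_def induced_def edges_def by auto
  obtain j where j: "j \<in> {1..r}" and jj: "janson p (p * real (card W)) W
              (hrestrict (copies (F j) (colour_graph G W c j) G) W)"
    using assms(8) tt Fwf Wsub Wbig Wcol unfolding class_E_def Let_def t_def[symmetric] t'_def p_def
    by blast
  show "janson (p_const k r) (p_const k r * real (card W)) W
             (hrestrict (copies (delete_vertex (H i) x) (colour_graph G S c i) G) W)"
  proof (cases "j = i")
    case True
    have WS: "W \<subseteq> S" using W by simp
    have "F j = delete_vertex (H i) x" unfolding F_def True by simp
    then show ?thesis using jj hrestrict_colour_eq[OF WS, of "delete_vertex (H i) x" G c i] unfolding p_def True by simp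
  next
    case False
    have jj2: "janson p (p * real (card W)) W
              (hrestrict (copies (H j) (colour_graph G S c j) G) W)"
      using jj hrestrict_colour_eq[of W S "H j" G c j] W False unfolding F_def by simp
    have "hrestrict (hrestrict (copies (H j) (colour_graph G S c j) G) S) W
        = hrestrict (copies (H j) (colour_graph G S c j) G) W"
      using W unfolding hrestrict_def by auto
    with jj2 have jj3: "janson p (p * real (card W)) W
              (hrestrict (hrestrict (copies (H j) (colour_graph G S c j) G) S) W)" by simp
    have hr: "hrestrict (hrestrict (copies (H j) (colour_graph G S c j) G) S) S
        = hrestrict (copies (H j) (colour_graph G S c j) G) S"
      unfolding hrestrict_def by auto
    have pos: "0 < 2 powi (-9) / real r * delta r * p * real N"
      using r0 d0 p0 N0 by simp
    have "2 powi (-9) / real r * delta r * p * real N = (1/64) * (p * (delta r * real N / (8 * real r)))"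
      by (simp add: power_int_def field_simps)
    also have "\<dots> \<le> p * (delta r * real N / (8 * real r))"
      using p0 d0 r0 by (intro mult_left_le_one_le) auto
    also have "\<dots> \<le> p * real (card W)" using W p0 by (intro mult_left_mono) auto
    finally have le: "2 powi (-9) / real r * delta r * p * real N \<le> p * real (card W)" .
    have "janson p (2 powi (-9) / real r * delta r * p * real N) S
         (hrestrict (copies (H j) (colour_graph G S c j) G) S)"
      using janson_ext[OF finS _ jj3 pos le] W hr by simp
    then show ?thesis using gp(3) j by blast
  qed
qed

end
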